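(* Let $f:(0,\infty)\to\mathbb{R}$ be defined by $$f(t)=\frac{e^{-t}}{-\log(1-e^{-t})}.$$ Then $f$ is nondecreasing on $(0,\infty)$, $\lim_{t\to0}f(t)=0$, $\lim_{t\to\infty}f(t)=1$, $1-f(t)\sim e^{-t}/2$ as $t\to\infty$, and $$\int_0^\infty\big(1-f(t)\big)\,dt=\gamma,$$ where $\gamma=-\Gamma'(1)$ is the Euler–Mascheroni constant.
   Context: $g\sim h$ means $g/h\to1$. *)

theory Defs
  imports "HOL-Analysis.Analysis" "HOL-Library.Landau_Symbols"
begin

definition f_lemma1 :: "real \<Rightarrow> real" where
  "f_lemma1 t = exp (- t) / (- ln (1 - exp (- t)))"

end

theory Submission
  imports Defs "HOL-Real_Asymp.Real_Asymp"
begin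
definition W :: "real \<Rightarrow> real" where "W t = - ln (1 - exp (- t))"

lemma W_basic:
  assumes "t > 0"
  shows "0 < exp (-t)" "exp (-t) < 1" "0 < W t" "exp (-t) \<le> W t"
        "exp (- W t) = 1 - exp (-t)" "W t \<le> exp (-t) / (1 - exp (-t))"
proof -
  show e0: "0 < exp (-t)" by simp
  show e1: "exp (-t) < 1" using assms by simp
  have l: "ln (1 - exp (-t)) < 0" using e0 e1 by simp
  then show "0 < W t" by (simp add: W_def)
  have "ln (1 - exp (-t)) \<le> (1 - exp (-t)) - 1" using e1 by (intro ln_le_minus_one) simp
  then show "exp (-t) \<le> W t" by (simp add: W_def)
  show "exp (- W t) = 1 - exp (-t)" using e1 by (simp add: W_def)
  have "ln (inverse (1 - exp (-t))) \<le> inverse (1 - exp (-t)) - 1" using e1 by (intro ln_le_minus_one) simp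
  moreover have "ln (inverse (1 - exp (-t))) = W t" using e1 by (simp add: W_def ln_inverse)
  moreover have "inverse (1 - exp (-t)) - 1 = exp (-t) / (1 - exp (-t))" using e1 by (simp add: field_simps)
  ultimately show "W t \<le> exp (-t) / (1 - exp (-t))" by simp
qed

lemma W_invol: "t > 0 \<Longrightarrow> W (W t) = t"
  using W_basic(5)[of t] by (simp add: W_def)

lemma W_deriv: "t > 0 \<Longrightarrow> (W has_real_derivative (- exp (-t) / (1 - exp (-t)))) (at t)"
  unfolding W_def using W_basic(2)[of t]
  by (auto intro!: derivative_eq_intros)

lemma f_eq: "f_lemma1 t = exp (-t) / W t" by (simp add: f_lemma1_def W_def)

lemma f_bounds: "t > 0 \<Longrightarrow> 0 < f_lemma1 t \<and> f_lemma1 t \<le> 1"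
  using W_basic[of t] by (simp add: f_eq field_simps)

lemma f_mono: "mono_on {0<..} f_lemma1"
proof (rule mono_onI)
  fix a b :: real assume ab: "a \<in> {0<..}" "b \<in> {0<..}" "a \<le> b"
  show "f_lemma1 a \<le> f_lemma1 b"
  proof (rule DERIV_nonneg_imp_nondecreasing[OF ab(3)])
    fix x assume x: "a \<le> x" "x \<le> b"
    hence xp: "x > 0" using ab by simp
    note B = W_basic[OF xp]
    have d: "(f_lemma1 has_real_derivative
       ((- exp (-x)) * W x - exp (-x) * (- exp (-x) / (1 - exp (-x)))) / (W x)^2) (at x)"
      unfolding f_eq[abs_def]
      using B by (auto intro!: derivative_eq_intros W_deriv[OF xp] simp: power2_eq_square)
    have "0 \<le> ((- exp (-x)) * W x - exp (-x) * (- exp (-x) / (1 - exp (-x)))) / (W x)^2"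
    proof -
      have "exp (-x) * W x \<le> exp (-x) * (exp (-x) / (1 - exp (-x)))"
        using B by (intro mult_left_mono) auto
      thus ?thesis by (intro divide_nonneg_nonneg) auto
    qed
    with d show "\<exists>y. (f_lemma1 has_real_derivative y) (at x) \<and> 0 \<le> y" by blast
  qed
qed

lemma improper_ftc:
  fixes F g :: "real \<Rightarrow> real"
  assumes der: "\<And>x. x \<ge> a \<Longrightarrow> (F has_real_derivative g x) (at x)"
    and nn: "\<And>x. x \<ge> a \<Longrightarrow> 0 \<le> g x"
    and lim: "(F \<longlongrightarrow> B) at_top"
  shows "(g has_integral (B - F a)) {a..}"
proof -
  define h where "h = (\<lambda>k::nat. \<lambda>x. if x \<in> {a..a + real k} then g x else 0)"
  have hi: "(h k has_integral (F (a + real k) - F a)) {a..}" for k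
  proof -
    have "(g has_integral (F (a + real k) - F a)) {a..a + real k}"
    proof (intro fundamental_theorem_of_calculus)
      fix x assume "x \<in> {a..a + real k}"
      hence "x \<ge> a" by simp
      hence "(F has_real_derivative g x) (at x within {a..a + real k})"
        by (rule has_field_derivative_at_within[OF der])
      thus "(F has_vector_derivative g x) (at x within {a..a + real k})"
        by (simp add: has_real_derivative_iff_has_vector_derivative)
    qed simp
    moreover have "{a..a + real k} \<subseteq> {a..}" by auto
    ultimately show ?thesis unfolding h_def by (simp only: has_integral_restrict)
  qed
  show ?thesis
  proof (rule has_integral_monotone_convergence_increasing[OF hi])
    fix k x assume "x \<in> {a..}"
    thus "h k x \<le> h (Suc k) x" unfolding h_def using nn by auto
  next
    fix x assume x: "x \<in> {a..}"
    obtain N :: nat where N: "x - a \<le> real N" using real_arch_simple by blast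
    have "\<forall>k\<ge>N. h k x = g x"
    proof (intro allI impI)
      fix k assume "k \<ge> N"
      hence "real N \<le> real k" by simp
      hence "x \<in> {a..a + real k}" using x N by simp
      thus "h k x = g x" unfolding h_def by simp
    qed
    hence "eventually (\<lambda>k. h k x = g x) sequentially"
      unfolding eventually_sequentially by blast
    thus "(\<lambda>k. h k x) \<longlonglongrightarrow> g x" by (rule tendsto_eventually)
  next
    have "filterlim (\<lambda>k::nat. a + real k) at_top sequentially"
      by (intro filterlim_tendsto_add_at_top[OF tendsto_const] filterlim_real_sequentially)
    hence "(\<lambda>k. F (a + real k)) \<longlonglongrightarrow> B" using lim by (rule filterlim_compose[rotated])
    thus "(\<lambda>k. F (a + real k) - F a) \<longlonglongrightarrow> B - F a" by (intro tendsto_intros)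
  qed
qed

lemma pow_step:
  fixes y :: real and m :: nat
  assumes "m \<ge> 1" "0 \<le> y" "y \<le> m"
  shows "(1 - y/m)^m \<le> (1 - y/(m+1))^(m+1)"
proof (cases "y = m")
  case True
  have "0 \<le> 1 - y/(m+1)" using assms by (simp add: field_simps)
  hence "0 \<le> (1 - y/(m+1))^(m+1)" by simp
  moreover have "(1 - y/m)^m = 0" using True assms by simp
  ultimately show ?thesis by linarith
next
  case False
  define b where "b = 1 - y/m"
  define a where "a = 1 - y/(m+1)"
  have mpos: "(0::real) < m" using assms by simp
  have b: "0 < b" using assms False mpos by (simp add: b_def field_simps)
  have "y/(m+1) \<le> y/m" using assms mpos by (intro divide_left_mono) auto
  hence x: "(a - b)/b \<ge> 0" using b by (simp add: a_def b_def)
  have "1 + real (m+1) * ((a-b)/b) \<le> (1 + (a-b)/b)^(m+1)"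
    by (rule Bernoulli_inequality) (use x in linarith)
  moreover have "1 + (a-b)/b = a/b" using b by (simp add: field_simps)
  moreover have "1 + real (m+1) * ((a-b)/b) = 1/b"
  proof -
    have e1: "real (m+1) * (y/(m+1)) = y" by simp
    have e2: "real (m+1) * (y/m) = y + y/m" using mpos by (simp add: field_simps)
    have ab: "real (m+1) * (a - b) = 1 - b" unfolding a_def b_def
      using e1 e2 by (simp add: right_diff_distrib)
    have "real (m+1) * ((a-b)/b) = (1 - b)/b" by (simp add: ab[symmetric])
    thus ?thesis using b by (simp add: field_simps)
  qed
  ultimately have "1/b \<le> (a/b)^(m+1)" by simp
  hence "1/b \<le> a^(m+1)/b^(m+1)" by (simp add: power_divide)
  hence "b^(m+1) * (1/b) \<le> a^(m+1)" using b by (simp add: field_simps)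
  hence "b^m \<le> a^(m+1)" using b by (simp add: field_simps)
  thus ?thesis by (simp add: a_def b_def)
qed

lemma lim1: "((\<lambda>t::real. exp t * (- ln (1 - exp (- t)))) \<longlongrightarrow> 1) at_top" by real_asymp
lemma lim2: "((\<lambda>t::real. exp (- t)) \<longlongrightarrow> 0) at_top" by real_asymp
lemma lim3: "((\<lambda>t::real. t + ln (- ln (1 - exp (- t)))) \<longlongrightarrow> 0) at_top" by real_asymp
lemma lim4: "((\<lambda>t::real. - ln (1 - exp (- t))) \<longlongrightarrow> 0) at_top" by real_asymp

definition Gf :: "nat \<Rightarrow> real \<Rightarrow> real" where
  "Gf n t = 1 - (1 - W t / n)^n / (W t * (exp t - 1))"
definition AF :: "nat \<Rightarrow> real \<Rightarrow> real" where
  "AF n t = t + ln (W t) + (\<Sum>k<n. (1 - W t / n)^(k+1) / real (k+1))"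
definition Gn :: "nat \<Rightarrow> real \<Rightarrow> real" where
  "Gn n t = (if W t \<le> real n then Gf n t else 1)"

lemma P_deriv:
  assumes "n > 0" "y > 0"
  shows "((\<lambda>y. \<Sum>k<n. (1 - y / n)^(k+1) / real (k+1)) has_real_derivative
          - (1 - (1 - y/n)^n) / y) (at y)"
proof -
  have h1: "((\<lambda>y. 1 - y/n) has_real_derivative -(1/n)) (at y)"
    using assms by (auto intro!: derivative_eq_intros)
  have h3: "((\<lambda>y. (1 - y/n)^(k+1) / real (k+1)) has_real_derivative - ((1 - y/n)^k / n)) (at y)" for k
  proof -
    have h2: "((\<lambda>y. (1 - y/n)^(k+1)) has_real_derivative real (k+1) * (1-y/n)^(k+1-1) * (-(1/n))) (at y)"
      by (rule DERIV_cong[OF DERIV_power[OF h1]]) simp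
    have "((\<lambda>y. (1 - y/n)^(k+1) / real (k+1)) has_real_derivative
            real (k+1) * (1-y/n)^(k+1-1) * (-(1/n)) / real (k+1)) (at y)"
      by (rule DERIV_cdivide[OF h2])
    moreover have "real (k+1) * (1-y/n)^(k+1-1) * (-(1/n)) / real (k+1) = - ((1 - y/n)^k / n)"
      by (simp del: of_nat_Suc)
    ultimately show ?thesis by simp
  qed
  have d: "((\<lambda>y. \<Sum>k<n. (1 - y / n)^(k+1) / real (k+1)) has_real_derivative
          (\<Sum>k<n. - ((1 - y/n)^k / n))) (at y)"
    by (rule DERIV_sum) (rule h3)
  have "(\<Sum>k<n. - ((1 - y/n)^k / n)) = - (\<Sum>k<n. (1 - y/n)^k) / n"
    by (simp add: sum_negf sum_divide_distrib)
  also have "(\<Sum>k<n. (1 - y/n)^k) = (1 - (1 - y/n)^n) / (y / n)"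
    using assms by (subst sum_gp_strict) auto
  also have "- ((1 - (1 - y/n)^n) / (y / n)) / n = - (1 - (1 - y/n)^n) / y"
    using assms by (simp add: field_simps)
  finally show ?thesis using d by simp
qed

lemma alg1: "(y::real) \<noteq> 0 \<Longrightarrow> E \<noteq> 0 \<Longrightarrow>
   1 + inverse y * (- (1 / E)) + (- (1 - q) / y) * (- (1 / E)) = 1 - q / (y * E)"
  by (simp add: field_simps)

lemma AF_deriv:
  assumes "n > 0" "t > 0"
  shows "(AF n has_real_derivative Gf n t) (at t)"
proof -
  note B = W_basic[OF assms(2)]
  have dW: "(W has_real_derivative (- exp (-t) / (1 - exp (-t)))) (at t)" by (rule W_deriv[OF assms(2)])
  have dP: "((\<lambda>t. \<Sum>k<n. (1 - W t / n)^(k+1) / real (k+1)) has_real_derivative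
       (- (1 - (1 - W t/n)^n) / W t) * (- exp (-t) / (1 - exp (-t)))) (at t)"
    using DERIV_chain2[OF P_deriv[OF assms(1) B(3)] dW] .
  have dL: "((\<lambda>t. ln (W t)) has_real_derivative inverse (W t) * (- exp (-t) / (1 - exp (-t)))) (at t)"
    using DERIV_chain2[OF DERIV_ln[OF B(3)] dW] .
  have dA: "((\<lambda>t. t + ln (W t) + (\<Sum>k<n. (1 - W t / n)^(k+1) / real (k+1))) has_real_derivative
      1 + inverse (W t) * (- exp (-t) / (1 - exp (-t))) + (- (1 - (1 - W t/n)^n) / W t) * (- exp (-t) / (1 - exp (-t)))) (at t)"
    by (intro DERIV_add DERIV_ident dL dP)
  have e: "- exp (-t) / (1 - exp (-t)) = - (1 / (exp t - 1))"
    using B by (simp add: exp_minus field_simps)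
  have "1 + inverse (W t) * (- exp (-t) / (1 - exp (-t))) + (- (1 - (1 - W t/n)^n) / W t) * (- exp (-t) / (1 - exp (-t)))
        = Gf n t"
    unfolding Gf_def e using B assms by (intro alg1) auto
  with dA show ?thesis unfolding AF_def[abs_def] by simp
qed

lemma W_antimono: "0 < a \<Longrightarrow> a \<le> b \<Longrightarrow> W b \<le> W a"
proof -
  assume a: "0 < a" "a \<le> b"
  have "exp (-b) \<le> exp (-a)" using a by simp
  moreover have "exp (-a) < 1" "exp (-b) < 1" using a by auto
  ultimately have "ln (1 - exp (-a)) \<le> ln (1 - exp (-b))" by (subst ln_le_cancel_iff) auto
  thus ?thesis by (simp add: W_def)
qed

lemma W_le_iff:
  assumes "n > 0" "t > 0"
  shows "W t \<le> real n \<longleftrightarrow> W (real n) \<le> t"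
proof
  assume "W t \<le> real n"
  from W_antimono[OF W_basic(3)[OF assms(2)] this] show "W (real n) \<le> t"
    using W_invol[OF assms(2)] by simp
next
  assume "W (real n) \<le> t"
  from W_antimono[OF W_basic(3)[of "real n"] this] show "W t \<le> real n"
    using W_invol[of "real n"] assms by simp
qed

lemma Gf_nonneg:
  assumes "n > 0" "t > 0" "W t \<le> real n"
  shows "0 \<le> Gf n t"
proof -
  note B = W_basic[OF assms(2)]
  have "(1 - W t / n)^n \<le> exp (- W t)"
    by (rule exp_ge_one_minus_x_over_n_power_n) (use assms in auto)
  also have "\<dots> = 1 - exp (-t)" by (rule B(5))
  finally have q: "(1 - W t / n)^n \<le> 1 - exp (-t)" .
  have ep: "exp t - 1 > 0" using assms by simp
  have "(1 - W t / n)^n / (W t * (exp t - 1)) \<le> (1 - exp (-t)) / (W t * (exp t - 1))"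
    using q ep B by (intro divide_right_mono) auto
  also have "(1 - exp (-t)) / (W t * (exp t - 1)) = exp (-t) / W t"
    using ep B by (simp add: exp_minus field_simps)
  also have "\<dots> \<le> 1" using B by simp
  finally show ?thesis unfolding Gf_def by simp
qed

lemma AF_lim:
  assumes "n > 0"
  shows "(AF n \<longlongrightarrow> harm n) at_top"
proof -
  have l3: "((\<lambda>t::real. t + ln (W t)) \<longlongrightarrow> 0) at_top" unfolding W_def by (rule lim3)
  have l4: "(W \<longlongrightarrow> 0) at_top" unfolding W_def[abs_def] by (rule lim4)
  have "((\<lambda>t. \<Sum>k<n. (1 - W t / n)^(k+1) / real (k+1)) \<longlongrightarrow> (\<Sum>k<n. (1 - 0 / n)^(k+1) / real (k+1))) at_top"
    by (intro tendsto_intros l4) (use assms in auto)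
  hence "((\<lambda>t. \<Sum>k<n. (1 - W t / n)^(k+1) / real (k+1)) \<longlongrightarrow> harm n) at_top"
    by (simp add: harm_altdef field_simps del: of_nat_Suc)
  from tendsto_add[OF l3 this] show ?thesis unfolding AF_def[abs_def] by simp
qed

lemma AF_at:
  assumes "n > 0"
  shows "AF n (W (real n)) = W (real n) + ln (real n)"
  using W_invol[of "real n"] assms by (simp add: AF_def)

lemma Gn_integral:
  assumes "n > 0"
  shows "(Gn n has_integral (harm n - ln (real n))) {0<..}"
proof -
  define a where "a = W (real n)"
  have a0: "a > 0" using W_basic(3)[of "real n"] assms by (simp add: a_def)
  have i2: "(Gf n has_integral (harm n - AF n a)) {a..}"
  proof (rule improper_ftc[OF AF_deriv[OF assms] Gf_nonneg[OF assms] AF_lim[OF assms]])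
  qed (use a0 W_le_iff[OF assms] in \<open>auto simp: a_def\<close>)
  have i2': "(Gn n has_integral (harm n - AF n a)) {a..}"
  proof (rule has_integral_cong[THEN iffD1, OF _ i2])
    fix x assume "x \<in> {a..}"
    hence "x > 0" "a \<le> x" using a0 by auto
    thus "Gf n x = Gn n x" using W_le_iff[OF assms] by (simp add: Gn_def a_def)
  qed
  have i1: "((\<lambda>x. 1) has_integral a) {0..a}"
    using has_integral_const_real[of "1::real" 0 a] a0 by simp
  have i1': "(Gn n has_integral a) {0..a}"
  proof (rule has_integral_spike[OF negligible_sing _ i1])
    fix x assume x: "x \<in> {0..a} - {0}"
    hence xp: "x > 0" "x \<le> a" by auto
    show "Gn n x = 1"
    proof (cases "x = a")
      case True
      hence "W x = real n" using W_invol[of "real n"] assms by (simp add: a_def)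
      thus ?thesis using True assms by (simp add: Gn_def Gf_def)
    next
      case False
      hence "\<not> W x \<le> real n" using W_le_iff[OF assms xp(1)] xp by (simp add: a_def)
      thus ?thesis by (simp add: Gn_def)
    qed
  qed
  have "(Gn n has_integral (a + (harm n - AF n a))) ({0..a} \<union> {a..})"
    by (rule has_integral_Un[OF i1' i2']) (rule negligible_subset[OF negligible_sing[of a]], auto)
  moreover have "{0..a} \<union> {a..} = {0::real..}" using a0 by auto
  moreover have "a + (harm n - AF n a) = harm n - ln (real n)"
    using AF_at[OF assms] by (simp add: a_def)
  ultimately have "(Gn n has_integral (harm n - ln (real n))) {0..}" by simp
  thus ?thesis
    by (rule has_integral_spike_set_eq[THEN iffD1, rotated -1])
       (rule negligible_subset[OF negligible_sing[of 0]], auto)+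
qed

lemma Gn_mono:
  assumes "n > 0" "t > 0"
  shows "Gn (Suc n) t \<le> Gn n t"
proof -
  note B = W_basic[OF assms(2)]
  have den: "W t * (exp t - 1) > 0" using B assms by simp
  show ?thesis
  proof (cases "W t \<le> real n")
    case True
    have "(1 - W t / n)^n \<le> (1 - W t / (n+1))^(n+1)"
      using pow_step[of n "W t"] True assms B by simp
    hence "(1 - W t / n)^n / (W t * (exp t - 1)) \<le> (1 - W t / (n+1))^(n+1) / (W t * (exp t - 1))"
      using den by (intro divide_right_mono) auto
    thus ?thesis using True by (simp add: Gn_def Gf_def)
  next
    case False
    show ?thesis
    proof (cases "W t \<le> real (Suc n)")
      case True
      have "0 \<le> 1 - W t / real (Suc n)" using True by (simp add: field_simps)
      hence "0 \<le> (1 - W t / real (Suc n))^(Suc n) / (W t * (exp t - 1))"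
        using den by simp
      thus ?thesis using True False by (simp add: Gn_def Gf_def)
    next
      case False2: False
      thus ?thesis using False by (simp add: Gn_def)
    qed
  qed
qed

lemma Gn_lim:
  assumes "t > 0"
  shows "(\<lambda>k. Gn (Suc k) t) \<longlonglongrightarrow> 1 - f_lemma1 t"
proof -
  note B = W_basic[OF assms]
  have ep: "exp t - 1 > 0" using assms by simp
  have l: "(\<lambda>k. (1 + (- W t) / real k)^k) \<longlonglongrightarrow> exp (- W t)"
    by (rule tendsto_exp_limit_sequentially)
  hence "(\<lambda>k. (1 + (- W t) / real (Suc k))^(Suc k)) \<longlonglongrightarrow> exp (- W t)"
    by (rule LIMSEQ_Suc)
  hence "(\<lambda>k. Gf (Suc k) t) \<longlonglongrightarrow> 1 - exp (- W t) / (W t * (exp t - 1))"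
    unfolding Gf_def by (intro tendsto_intros) (use B ep in auto)
  moreover have "1 - exp (- W t) / (W t * (exp t - 1)) = 1 - f_lemma1 t"
  proof -
    have "(1 - exp (-t)) / (W t * (exp t - 1)) = exp (-t) / W t"
      using ep B by (simp add: exp_minus field_simps)
    thus ?thesis unfolding B(5) f_eq by simp
  qed
  moreover have "eventually (\<lambda>k. Gn (Suc k) t = Gf (Suc k) t) sequentially"
  proof -
    obtain N :: nat where N: "W t \<le> real N" using real_arch_simple by blast
    have "\<forall>k\<ge>N. Gn (Suc k) t = Gf (Suc k) t"
    proof (intro allI impI)
      fix k assume "N \<le> k"
      hence "W t \<le> real (Suc k)" using N by simp
      thus "Gn (Suc k) t = Gf (Suc k) t" by (simp add: Gn_def)
    qed
    thus ?thesis unfolding eventually_sequentially by blast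
  qed
  ultimately show ?thesis
    by (metis (mono_tags, lifting) Lim_transform_eventually eventually_mono)
qed

lemma main_integral: "((\<lambda>t. 1 - f_lemma1 t) has_integral euler_mascheroni) {0<..}"
proof -
  have hi: "(Gn (Suc k) has_integral (harm (Suc k) - ln (real (Suc k)))) {0<..}" for k
    by (rule Gn_integral) simp
  have lim: "(\<lambda>k. harm (Suc k) - ln (real (Suc k)) :: real) \<longlonglongrightarrow> euler_mascheroni"
    using LIMSEQ_Suc[OF euler_mascheroni_LIMSEQ] by simp
  have ie: "integral {0<..} (Gn (Suc k)) = harm (Suc k) - ln (real (Suc k))" for k
    using hi by (rule integral_unique)
  have mc: "(\<lambda>t. 1 - f_lemma1 t) integrable_on {0<..} \<and>
     (\<lambda>k. integral {0<..} (Gn (Suc k))) \<longlonglongrightarrow> integral {0<..} (\<lambda>t. 1 - f_lemma1 t)"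
  proof (rule monotone_convergence_decreasing)
    show "Gn (Suc k) integrable_on {0<..}" for k using hi by blast
    show "Gn (Suc (Suc k)) x \<le> Gn (Suc k) x" if "x \<in> {0<..}" for k x
      using Gn_mono[of "Suc k" x] that by simp
    show "(\<lambda>k. Gn (Suc k) x) \<longlonglongrightarrow> 1 - f_lemma1 x" if "x \<in> {0<..}" for x
      using Gn_lim[of x] that by simp
    show "bounded (range (\<lambda>k. integral {0<..} (Gn (Suc k))))"
      unfolding ie using convergent_imp_bounded[OF lim] by simp
  qed
  have "integral {0<..} (\<lambda>t. 1 - f_lemma1 t) = euler_mascheroni"
    using mc lim unfolding ie by (blast intro: LIMSEQ_unique)
  with mc show ?thesis using integrable_integral by metis
qed

theorem lemma1:
  shows "mono_on {0<..} f_lemma1 \<and>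
         (f_lemma1 \<longlongrightarrow> 0) (at_right 0) \<and>
         (f_lemma1 \<longlongrightarrow> 1) at_top \<and>
         (\<lambda>t. 1 - f_lemma1 t) \<sim>[at_top] (\<lambda>t. exp (- t) / 2) \<and>
         ((\<lambda>t. 1 - f_lemma1 t) has_integral euler_mascheroni) {0<..}"
proof (intro conjI)
  show "mono_on {0<..} f_lemma1" by (rule f_mono)
  show "(f_lemma1 \<longlongrightarrow> 0) (at_right 0)" unfolding f_lemma1_def by real_asymp
  show "(f_lemma1 \<longlongrightarrow> 1) at_top" unfolding f_lemma1_def by real_asymp
  show "(\<lambda>t. 1 - f_lemma1 t) \<sim>[at_top] (\<lambda>t. exp (- t) / 2)" unfolding f_lemma1_def by real_asymp
  show "((\<lambda>t. 1 - f_lemma1 t) has_integral euler_mascheroni) {0<..}" by (rule main_integral)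
qed

end
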